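(* Let $S$ be a solid and let $x\in S^*$ with $x=a+e(x)$ for some $a\in S$ with $e(a)=0$. Suppose $b\in S$ satisfies $e(b)=0$ and $u(x)=1+b+e(u(x))$. Then $|b|\le e(u(x))$.
   Context: A solid is a set $S$ with two binary operations $+$ and $\cdot$ (written $xy$) and a binary relation $\le$ satisfying the following axioms (all variables range over $S$). (A1) $+$ is associative and commutative. (A2) For each $x$ there is $e$ with $x+e=x$ such that $e+f=e$ for every $f$ with $x+f=x$; this $e$ is unique and is denoted $e(x)$ (the magnitude of $x$). An element $x$ with $x=e(x)$ is called a magnitude. (A3) For each $x$ there is $s$ with $x+s=e(x)$ and $e(s)=e(x)$; it is unique and denoted $-x$; write $x-y$ for $x+(-y)$. (A4) $e(x+y)=e(x)$ or $e(x+y)=e(y)$. (M1) $\cdot$ is associative and commutative. (M2) For each $x\neq e(x)$ there is $u$ with $xu=x$ such that $uv=u$ for every $v$ with $xv=x$; it is unique and denoted $u(x)$. (M3) For each $x\ne e(x)$ there is $d$ with $xd=u(x)$ and $u(d)=u(x)$; it is unique and denoted $x^{-1}$; write $y/x$ for $yx^{-1}$. (M4) If $x\neq e(x)$ and $y\ne e(y)$ then $u(xy)=u(x)$ or $u(xy)=u(y)$. (O1) $\le$ is a total order (reflexive, antisymmetric, transitive, total); $x<y$ means $x\le y$ and $x\ne y$. (O2) $x\le y\Rightarrow x+z\le y+z$. (O3) $y+e(x)=e(x)\Rightarrow (y\le e(x)$ and $-y\le e(x))$. (O4) $(e(x)<x$ and $y\le z)\Rightarrow xy\le xz$. (O5)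 $e(y)\le y\le z\Rightarrow e(x)y\le e(x)z$. (AM1) For all $x,y$ there is $z$ with $e(x)y=e(z)$. (AM2) $e(xy)=e(x)y+e(y)x$. (AM3) If $x\ne e(x)$ then $e(u(x))=e(x)/x$. (AM4) (distributivity axiom) $xy+xz=x(y+z)+e(x)y+e(x)z$. (AM5) $-(xy)=(-x)y$. (E1) There is $m$ with $m+x=x$ for all $x$; it is unique, called zero and denoted $0$. (E2) There is $u$ with $ux=x$ for all $x$; it is unique, called one and denoted $1$. (E3) There is $M$ with $e(x)+M=M$ for all $x$. (E4) There is $x$ with $e(x)\ne 0$ and $e(x)\ne M$. (E5) For every $x$ there is $a$ with $x=a+e(x)$ and $e(a)=0$. (E6) If $x,y$ are magnitudes with $x<y$, there is $z$ with $z\ne e(z)$ and $x<z<y$. Further notation: $S^*=\{x\in S: x\ne e(x)\}$ (zeroless elements). $x$ is positive if $e(x)\le x$ and negative if $x<e(x)$; $|x|=x$ if $x$ is positive and $|x|=-x$ if $x$ is negative. $x$ is precise if $e(x)=0$. The relative uncertainty $R(x)$ is $e(u(x))$ if $x\ne e(x)$, and $M$ (from (E3)) if $x=e(x)$. *)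

theory Defs
  imports Main
begin

text \<open>A solid is modelled on a type 'a (the carrier S = UNIV) with operations
  add, mul and relation le.  Derived notions are defined via THE.\<close>

definition mag :: "('a \<Rightarrow> 'a \<Rightarrow> 'a) \<Rightarrow> 'a \<Rightarrow> 'a" where
  "mag add x = (THE e. add x e = x \<and> (\<forall>f. add x f = x \<longrightarrow> add e f = e))"

definition neg_s :: "('a \<Rightarrow> 'a \<Rightarrow> 'a) \<Rightarrow> 'a \<Rightarrow> 'a" where
  "neg_s add x = (THE s. add x s = mag add x \<and> mag add s = mag add x)"

definition unit_s :: "('a \<Rightarrow> 'a \<Rightarrow> 'a) \<Rightarrow> 'a \<Rightarrow> 'a" where
  "unit_s mul x = (THE u. mul x u = x \<and> (\<forall>v. mul x v = x \<longrightarrow> mul u v = u))"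

definition inv_s :: "('a \<Rightarrow> 'a \<Rightarrow> 'a) \<Rightarrow> ('a \<Rightarrow> 'a \<Rightarrow> 'a) \<Rightarrow> 'a \<Rightarrow> 'a" where
  "inv_s add mul x = (THE d. mul x d = unit_s mul x \<and> d \<noteq> mag add d
                              \<and> unit_s mul d = unit_s mul x)"

definition zero_s :: "('a \<Rightarrow> 'a \<Rightarrow> 'a) \<Rightarrow> 'a" where
  "zero_s add = (THE m. \<forall>x. add m x = x)"

definition one_s :: "('a \<Rightarrow> 'a \<Rightarrow> 'a) \<Rightarrow> 'a" where
  "one_s mul = (THE u. \<forall>x. mul u x = x)"

definition abs_s :: "('a \<Rightarrow> 'a \<Rightarrow> 'a) \<Rightarrow> ('a \<Rightarrow> 'a \<Rightarrow> bool) \<Rightarrow> 'a \<Rightarrow> 'a" where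
  "abs_s add le x = (if le (mag add x) x then x else neg_s add x)"

definition solid :: "('a \<Rightarrow> 'a \<Rightarrow> 'a) \<Rightarrow> ('a \<Rightarrow> 'a \<Rightarrow> 'a) \<Rightarrow> ('a \<Rightarrow> 'a \<Rightarrow> bool) \<Rightarrow> bool" where
  "solid add mul le \<longleftrightarrow>
   \<comment> \<open>A1\<close>
   (\<forall>x y z. add (add x y) z = add x (add y z)) \<and> (\<forall>x y. add x y = add y x) \<and>
   \<comment> \<open>A2\<close>
   (\<forall>x. \<exists>!e. add x e = x \<and> (\<forall>f. add x f = x \<longrightarrow> add e f = e)) \<and>
   \<comment> \<open>A3\<close>
   (\<forall>x. \<exists>!s. add x s = mag add x \<and> mag add s = mag add x) \<and>
   \<comment> \<open>A4\<close>
   (\<forall>x y. mag add (add x y) = mag add x \<or> mag add (add x y) = mag add y) \<and>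
   \<comment> \<open>M1\<close>
   (\<forall>x y z. mul (mul x y) z = mul x (mul y z)) \<and> (\<forall>x y. mul x y = mul y x) \<and>
   \<comment> \<open>M2\<close>
   (\<forall>x. x \<noteq> mag add x \<longrightarrow> (\<exists>!u. mul x u = x \<and> (\<forall>v. mul x v = x \<longrightarrow> mul u v = u))) \<and>
   \<comment> \<open>M3\<close>
   (\<forall>x. x \<noteq> mag add x \<longrightarrow>
        (\<exists>!d. mul x d = unit_s mul x \<and> d \<noteq> mag add d \<and> unit_s mul d = unit_s mul x)) \<and>
   \<comment> \<open>M4\<close>
   (\<forall>x y. x \<noteq> mag add x \<and> y \<noteq> mag add y \<longrightarrow>
        unit_s mul (mul x y) = unit_s mul x \<or> unit_s mul (mul x y) = unit_s mul y) \<and>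
   \<comment> \<open>O1\<close>
   (\<forall>x. le x x) \<and> (\<forall>x y. le x y \<and> le y x \<longrightarrow> x = y) \<and>
   (\<forall>x y z. le x y \<and> le y z \<longrightarrow> le x z) \<and> (\<forall>x y. le x y \<or> le y x) \<and>
   \<comment> \<open>O2\<close>
   (\<forall>x y z. le x y \<longrightarrow> le (add x z) (add y z)) \<and>
   \<comment> \<open>O3\<close>
   (\<forall>x y. add y (mag add x) = mag add x \<longrightarrow>
        le y (mag add x) \<and> le (neg_s add y) (mag add x)) \<and>
   \<comment> \<open>O4\<close>
   (\<forall>x y z. (le (mag add x) x \<and> mag add x \<noteq> x) \<and> le y z \<longrightarrow> le (mul x y) (mul x z)) \<and>
   \<comment> \<open>O5\<close>
   (\<forall>x y z. le (mag add y) y \<and> le y z \<longrightarrow> le (mul (mag add x) y) (mul (mag add x) z)) \<and>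
   \<comment> \<open>AM1\<close>
   (\<forall>x y. \<exists>z. mul (mag add x) y = mag add z) \<and>
   \<comment> \<open>AM2\<close>
   (\<forall>x y. mag add (mul x y) = add (mul (mag add x) y) (mul (mag add y) x)) \<and>
   \<comment> \<open>AM3\<close>
   (\<forall>x. x \<noteq> mag add x \<longrightarrow> mag add (unit_s mul x) = mul (mag add x) (inv_s add mul x)) \<and>
   \<comment> \<open>AM4\<close>
   (\<forall>x y z. add (mul x y) (mul x z) =
        add (add (mul x (add y z)) (mul (mag add x) y)) (mul (mag add x) z)) \<and>
   \<comment> \<open>AM5\<close>
   (\<forall>x y. neg_s add (mul x y) = mul (neg_s add x) y) \<and>
   \<comment> \<open>E1\<close>
   (\<exists>!m. \<forall>x. add m x = x) \<and>
   \<comment> \<open>E2\<close>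
   (\<exists>!u. \<forall>x. mul u x = x) \<and>
   \<comment> \<open>E3 and E4 (E4 refers to the element M of E3)\<close>
   (\<exists>M. (\<forall>x. add (mag add x) M = M) \<and>
        (\<exists>x. mag add x \<noteq> zero_s add \<and> mag add x \<noteq> M)) \<and>
   \<comment> \<open>E5\<close>
   (\<forall>x. \<exists>a. x = add a (mag add x) \<and> mag add a = zero_s add) \<and>
   \<comment> \<open>E6\<close>
   (\<forall>x y. x = mag add x \<and> y = mag add y \<and> le x y \<and> x \<noteq> y \<longrightarrow>
        (\<exists>z. z \<noteq> mag add z \<and> le x z \<and> x \<noteq> z \<and> le z y \<and> z \<noteq> y))"

end

theory Submission
  imports Defs
begin

locale sol =
  fixes add mul :: "'a \<Rightarrow> 'a \<Rightarrow> 'a" and le :: "'a \<Rightarrow> 'a \<Rightarrow> bool"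
  assumes S: "solid add mul le"
begin

abbreviation "e \<equiv> mag add"
abbreviation "Z \<equiv> zero_s add"
abbreviation "I \<equiv> one_s mul"
abbreviation "ng \<equiv> neg_s add"

lemma assoc: "add (add x y) z = add x (add y z)"
  using S[unfolded solid_def, THEN conjunct1] by blast
lemma comm: "add x y = add y x"
  using S[unfolded solid_def, THEN conjunct2, THEN conjunct1] by blast
lemma A2: "\<exists>!e. add x e = x \<and> (\<forall>f. add x f = x \<longrightarrow> add e f = e)"
  using S[unfolded solid_def, THEN conjunct2, THEN conjunct2, THEN conjunct1] by blast
lemma A3: "\<exists>!s. add x s = e x \<and> e s = e x"
  using S[unfolded solid_def, THEN conjunct2, THEN conjunct2, THEN conjunct2, THEN conjunct1] by blast
lemma A4: "e (add x y) = e x \<or> e (add x y) = e y"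
  using S[unfolded solid_def, THEN conjunct2, THEN conjunct2, THEN conjunct2, THEN conjunct2, THEN conjunct1] by blast
lemma massoc: "mul (mul x y) z = mul x (mul y z)"
  using S[unfolded solid_def, THEN conjunct2, THEN conjunct2, THEN conjunct2, THEN conjunct2, THEN conjunct2, THEN conjunct1] by blast
lemma mcomm: "mul x y = mul y x"
  using S[unfolded solid_def, THEN conjunct2, THEN conjunct2, THEN conjunct2, THEN conjunct2, THEN conjunct2, THEN conjunct2, THEN conjunct1] by blast
lemma M2: "x \<noteq> e x \<Longrightarrow> \<exists>!u. mul x u = x \<and> (\<forall>v. mul x v = x \<longrightarrow> mul u v = u)"
  using S[unfolded solid_def, THEN conjunct2, THEN conjunct2, THEN conjunct2, THEN conjunct2, THEN conjunct2, THEN conjunct2, THEN conjunct2, THEN conjunct1] by blast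
lemma lrefl: "le x x"
  using S[unfolded solid_def, THEN conjunct2, THEN conjunct2, THEN conjunct2, THEN conjunct2, THEN conjunct2, THEN conjunct2, THEN conjunct2, THEN conjunct2, THEN conjunct2, THEN conjunct2, THEN conjunct1] by blast
lemma lantisym: "le x y \<Longrightarrow> le y x \<Longrightarrow> x = y"
  using S[unfolded solid_def, THEN conjunct2, THEN conjunct2, THEN conjunct2, THEN conjunct2, THEN conjunct2, THEN conjunct2, THEN conjunct2, THEN conjunct2, THEN conjunct2, THEN conjunct2, THEN conjunct2, THEN conjunct1] by blast
lemma ltrans: "le x y \<Longrightarrow> le y z \<Longrightarrow> le x z"
  using S[unfolded solid_def, THEN conjunct2, THEN conjunct2, THEN conjunct2, THEN conjunct2, THEN conjunct2, THEN conjunct2, THEN conjunct2, THEN conjunct2, THEN conjunct2, THEN conjunct2, THEN conjunct2, THEN conjunct2, THEN conjunct1] by blast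
lemma total: "le x y \<or> le y x"
  using S[unfolded solid_def, THEN conjunct2, THEN conjunct2, THEN conjunct2, THEN conjunct2, THEN conjunct2, THEN conjunct2, THEN conjunct2, THEN conjunct2, THEN conjunct2, THEN conjunct2, THEN conjunct2, THEN conjunct2, THEN conjunct2, THEN conjunct1] by blast
lemma O2: "le x y \<Longrightarrow> le (add x z) (add y z)"
  using S[unfolded solid_def, THEN conjunct2, THEN conjunct2, THEN conjunct2, THEN conjunct2, THEN conjunct2, THEN conjunct2, THEN conjunct2, THEN conjunct2, THEN conjunct2, THEN conjunct2, THEN conjunct2, THEN conjunct2, THEN conjunct2, THEN conjunct2, THEN conjunct1] by blast
lemma O3: "add y (e x) = e x \<Longrightarrow> le y (e x) \<and> le (ng y) (e x)"
  using S[unfolded solid_def, THEN conjunct2, THEN conjunct2, THEN conjunct2, THEN conjunct2, THEN conjunct2, THEN conjunct2, THEN conjunct2, THEN conjunct2, THEN conjunct2, THEN conjunct2, THEN conjunct2, THEN conjunct2, THEN conjunct2, THEN conjunct2, THEN conjunct2, THEN conjunct1] by blast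
lemma O4: "le (e x) x \<Longrightarrow> e x \<noteq> x \<Longrightarrow> le y z \<Longrightarrow> le (mul x y) (mul x z)"
  using S[unfolded solid_def, THEN conjunct2, THEN conjunct2, THEN conjunct2, THEN conjunct2, THEN conjunct2, THEN conjunct2, THEN conjunct2, THEN conjunct2, THEN conjunct2, THEN conjunct2, THEN conjunct2, THEN conjunct2, THEN conjunct2, THEN conjunct2, THEN conjunct2, THEN conjunct2, THEN conjunct1] by blast
lemma O5: "le (e y) y \<Longrightarrow> le y z \<Longrightarrow> le (mul (e x) y) (mul (e x) z)"
  using S[unfolded solid_def, THEN conjunct2, THEN conjunct2, THEN conjunct2, THEN conjunct2, THEN conjunct2, THEN conjunct2, THEN conjunct2, THEN conjunct2, THEN conjunct2, THEN conjunct2, THEN conjunct2, THEN conjunct2, THEN conjunct2, THEN conjunct2, THEN conjunct2, THEN conjunct2, THEN conjunct2, THEN conjunct1] by blast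
lemma AM1: "\<exists>z. mul (e x) y = e z"
  using S[unfolded solid_def, THEN conjunct2, THEN conjunct2, THEN conjunct2, THEN conjunct2, THEN conjunct2, THEN conjunct2, THEN conjunct2, THEN conjunct2, THEN conjunct2, THEN conjunct2, THEN conjunct2, THEN conjunct2, THEN conjunct2, THEN conjunct2, THEN conjunct2, THEN conjunct2, THEN conjunct2, THEN conjunct2, THEN conjunct1] by blast
lemma AM2: "e (mul x y) = add (mul (e x) y) (mul (e y) x)"
  using S[unfolded solid_def, THEN conjunct2, THEN conjunct2, THEN conjunct2, THEN conjunct2, THEN conjunct2, THEN conjunct2, THEN conjunct2, THEN conjunct2, THEN conjunct2, THEN conjunct2, THEN conjunct2, THEN conjunct2, THEN conjunct2, THEN conjunct2, THEN conjunct2, THEN conjunct2, THEN conjunct2, THEN conjunct2, THEN conjunct2, THEN conjunct1] by blast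
lemma AM4: "add (mul x y) (mul x z) = add (add (mul x (add y z)) (mul (e x) y)) (mul (e x) z)"
  using S[unfolded solid_def, THEN conjunct2, THEN conjunct2, THEN conjunct2, THEN conjunct2, THEN conjunct2, THEN conjunct2, THEN conjunct2, THEN conjunct2, THEN conjunct2, THEN conjunct2, THEN conjunct2, THEN conjunct2, THEN conjunct2, THEN conjunct2, THEN conjunct2, THEN conjunct2, THEN conjunct2, THEN conjunct2, THEN conjunct2, THEN conjunct2, THEN conjunct2, THEN conjunct1] by blast
lemma AM5: "ng (mul x y) = mul (ng x) y"
  using S[unfolded solid_def, THEN conjunct2, THEN conjunct2, THEN conjunct2, THEN conjunct2, THEN conjunct2, THEN conjunct2, THEN conjunct2, THEN conjunct2, THEN conjunct2, THEN conjunct2, THEN conjunct2, THEN conjunct2, THEN conjunct2, THEN conjunct2, THEN conjunct2, THEN conjunct2, THEN conjunct2, THEN conjunct2, THEN conjunct2, THEN conjunct2, THEN conjunct2, THEN conjunct2, THEN conjunct1] by blast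
lemma E1: "\<exists>!m. \<forall>x. add m x = x"
  using S[unfolded solid_def, THEN conjunct2, THEN conjunct2, THEN conjunct2, THEN conjunct2, THEN conjunct2, THEN conjunct2, THEN conjunct2, THEN conjunct2, THEN conjunct2, THEN conjunct2, THEN conjunct2, THEN conjunct2, THEN conjunct2, THEN conjunct2, THEN conjunct2, THEN conjunct2, THEN conjunct2, THEN conjunct2, THEN conjunct2, THEN conjunct2, THEN conjunct2, THEN conjunct2, THEN conjunct2, THEN conjunct1] by blast
lemma E2: "\<exists>!u. \<forall>x. mul u x = x"
  using S[unfolded solid_def, THEN conjunct2, THEN conjunct2, THEN conjunct2, THEN conjunct2, THEN conjunct2, THEN conjunct2, THEN conjunct2, THEN conjunct2, THEN conjunct2, THEN conjunct2, THEN conjunct2, THEN conjunct2, THEN conjunct2, THEN conjunct2, THEN conjunct2, THEN conjunct2, THEN conjunct2, THEN conjunct2, THEN conjunct2, THEN conjunct2, THEN conjunct2, THEN conjunct2, THEN conjunct2, THEN conjunct2, THEN conjunct1] by blast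
lemma E4: "\<exists>x. e x \<noteq> Z"
  using S[unfolded solid_def, THEN conjunct2, THEN conjunct2, THEN conjunct2, THEN conjunct2, THEN conjunct2, THEN conjunct2, THEN conjunct2, THEN conjunct2, THEN conjunct2, THEN conjunct2, THEN conjunct2, THEN conjunct2, THEN conjunct2, THEN conjunct2, THEN conjunct2, THEN conjunct2, THEN conjunct2, THEN conjunct2, THEN conjunct2, THEN conjunct2, THEN conjunct2, THEN conjunct2, THEN conjunct2, THEN conjunct2, THEN conjunct2, THEN conjunct1] by blast
lemma E5: "\<exists>a. x = add a (e x) \<and> e a = Z"
  using S[unfolded solid_def, THEN conjunct2, THEN conjunct2, THEN conjunct2, THEN conjunct2, THEN conjunct2, THEN conjunct2, THEN conjunct2, THEN conjunct2, THEN conjunct2, THEN conjunct2, THEN conjunct2, THEN conjunct2, THEN conjunct2, THEN conjunct2, THEN conjunct2, THEN conjunct2, THEN conjunct2, THEN conjunct2, THEN conjunct2, THEN conjunct2, THEN conjunct2, THEN conjunct2, THEN conjunct2, THEN conjunct2, THEN conjunct2, THEN conjunct2, THEN conjunct1] by blast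
lemma E6: "x = e x \<Longrightarrow> y = e y \<Longrightarrow> le x y \<Longrightarrow> x \<noteq> y \<Longrightarrow>
        (\<exists>z. z \<noteq> e z \<and> le x z \<and> x \<noteq> z \<and> le z y \<and> z \<noteq> y)" using S unfolding solid_def by blast

lemma lcomm: "add x (add y z) = add y (add x z)" using assoc comm by metis

lemma zero_add[simp]: "add Z x = x"
  using theI'[OF E1] unfolding zero_s_def by blast
lemma add_zero[simp]: "add x Z = x" using zero_add comm by metis
lemma one_mul[simp]: "mul I x = x"
  using theI'[OF E2] unfolding one_s_def by blast
lemma mul_one[simp]: "mul x I = x" using one_mul mcomm by metis

lemma mag_add[simp]: "add x (e x) = x"
  using theI'[OF A2[of x]] unfolding mag_def by blast
lemma mag_abs: "add x f = x \<Longrightarrow> add (e x) f = e x"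
  using theI'[OF A2[of x]] unfolding mag_def by blast
lemma mag_idem[simp]: "add (e x) (e x) = e x" using mag_abs mag_add by blast
lemma mag_mag[simp]: "e (e x) = e x"
proof -
  have "add (e x) (e x) = e x \<and> (\<forall>f. add (e x) f = e x \<longrightarrow> add (e x) f = e x)" by simp
  then show ?thesis unfolding mag_def[of add "e x"] using the1_equality[OF A2[of "e x"]]
    by (metis mag_def)
qed
lemma mag_Z[simp]: "e Z = Z" using mag_add[of Z] zero_add by metis

lemma neg_add[simp]: "add x (ng x) = e x"
  using theI'[OF A3[of x]] unfolding neg_s_def by blast
lemma mag_neg[simp]: "e (ng x) = e x"
  using theI'[OF A3[of x]] unfolding neg_s_def by blast
lemma neg_unique: "add x s = e x \<Longrightarrow> e s = e x \<Longrightarrow> ng x = s"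
  using the1_equality[OF A3[of x]] unfolding neg_s_def by blast
lemma neg_mag: "e m = m \<Longrightarrow> ng m = m" using neg_unique[of m m] mag_idem by metis
lemma neg_neg[simp]: "ng (ng y) = y" using neg_unique[of "ng y" y] comm neg_add mag_neg by metis

lemma mag_nonneg: "le Z (e x)" using O3[of Z x] by simp

lemma is_mag: "y = e z \<Longrightarrow> e y = y" by simp

lemma mag_sum: "e m1 = m1 \<Longrightarrow> e m2 = m2 \<Longrightarrow> e (add m1 m2) = add m1 m2"
proof -
  assume h1: "e m1 = m1" and h2: "e m2 = m2"
  have "e (add m1 m2) = m1 \<or> e (add m1 m2) = m2" using A4 h1 h2 by metis
  moreover have n: "add (add m1 m2) m2 = add m1 m2" "add (add m1 m2) m1 = add m1 m2"
    using h1 h2 mag_idem assoc comm by metis+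
  ultimately show ?thesis using mag_abs[OF n(1)] mag_abs[OF n(2)] comm by metis
qed

lemma unit1: "x \<noteq> e x \<Longrightarrow> mul x (unit_s mul x) = x"
  using theI'[OF M2] unfolding unit_s_def by blast
lemma unit2: "x \<noteq> e x \<Longrightarrow> mul x v = x \<Longrightarrow> mul (unit_s mul x) v = unit_s mul x"
  using theI'[OF M2] unfolding unit_s_def by blast

lemma mag_prec_plus: "e y = Z \<Longrightarrow> e M = M \<Longrightarrow> e (add y M) = M"
proof -
  assume h: "e y = Z" "e M = M"
  have n: "add (add y M) M = add y M" using assoc h(2) mag_idem by metis
  have "e (add y M) = Z \<or> e (add y M) = M" using A4 h by metis
  then show ?thesis using mag_abs[OF n] by auto
qed

lemma neg_plus: "e c = Z \<Longrightarrow> e M = M \<Longrightarrow> ng (add c M) = add (ng c) M"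
proof -
  assume h: "e c = Z" "e M = M"
  have "add (add c M) (add (ng c) M) = add (add c (ng c)) (add M M)"
    by (simp only: assoc comm lcomm)
  also have "\<dots> = M" using h mag_idem[of M] by simp
  finally have 1: "add (add c M) (add (ng c) M) = e (add c M)" using mag_prec_plus h by simp
  have 2: "e (add (ng c) M) = e (add c M)" using mag_prec_plus h by simp
  show ?thesis using neg_unique[OF 1 2] .
qed

lemma magmul: "e (mul (e x) y) = mul (e x) y"
  using AM1[of x y] by auto

lemma one_zeroless: "I \<noteq> e I"
proof
  assume h: "I = e I"
  have all: "e y = y" for y
  proof -
    have "e (mul I y) = add (mul (e I) y) (mul (e y) I)" by (rule AM2)
    then show ?thesis using h[symmetric] by simp
  qed
  obtain x where x: "e x \<noteq> Z" using E4 by blast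
  have "le Z (e x)" by (rule mag_nonneg)
  then obtain z where "z \<noteq> e z" using E6[of Z "e x"] x by auto
  then show False using all by simp
qed

lemma eI_le_I: "le (e I) I"
proof (rule ccontr)
  assume nle: "\<not> le (e I) I"
  then have l: "le I (e I)" using total by blast
  have "le (add I (ng I)) (add (e I) (ng I))" using O2[OF l] .
  moreover have "add (e I) (ng I) = ng I" using comm[of "e I" "ng I"] mag_add[of "ng I"] by simp
  ultimately have a: "le (e I) (ng I)" by simp
  have nz: "ng I \<noteq> e I"
  proof
    assume "ng I = e I"
    then have "I = ng (e I)" using neg_neg by metis
    then show False using neg_mag[of "e I"] one_zeroless by simp
  qed
  have "le (mul (ng I) I) (mul (ng I) (e I))"
    using O4[of "ng I" I "e I"] a nz l by simp
  moreover have "mul (ng I) (e I) = e I"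
    using AM5[of I "e I"] neg_mag[of "e I"] by simp
  ultimately have "le (ng I) (e I)" by simp
  then show False using a nz lantisym by blast
qed

lemma eI_prec: "e p = Z \<Longrightarrow> mul (e I) p = Z"
  using AM2[of I p] by simp

lemma eI_zero: "e I = Z"
proof -
  obtain a1 where a1: "I = add a1 (e I)" "e a1 = Z" using E5 by blast
  have la: "le (e I) a1"
  proof (rule ccontr)
    assume "\<not> le (e I) a1"
    then have "le a1 (e I)" using total by blast
    then have "le (add a1 (e I)) (add (e I) (e I))" by (rule O2)
    then have "le I (e I)" using a1 by simp
    then show False using eI_le_I lantisym one_zeroless by metis
  qed
  have p2: "e (add a1 a1) = Z" using A4[of a1 a1] a1 by auto
  have "le (add (e I) a1) (add a1 a1)" using O2[OF la] .
  then have lI: "le I (add a1 a1)" using a1 comm by metis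
  have "le (mul (e I) I) (mul (e I) (add a1 a1))" using O5[OF eI_le_I lI] .
  then have "le (e I) Z" using eI_prec[OF p2] by simp
  then show ?thesis using mag_nonneg lantisym by metis
qed

lemma Zmul_prec: "e p = Z \<Longrightarrow> mul Z p = Z"
  using eI_prec eI_zero by metis

lemma Zmul_absorb: "add (mul Z y) (e y) = e y"
  using AM2[of I y] eI_zero by simp

lemma distrib_prec: "e p = Z \<Longrightarrow> e y = Z \<Longrightarrow> e z = Z \<Longrightarrow>
   mul p (add y z) = add (mul p y) (mul p z)"
  using AM4[of p y z] Zmul_prec by simp

lemma mag_sum2: "e m1 = m1 \<Longrightarrow> e m2 = m2 \<Longrightarrow> add m1 m2 = m1 \<or> add m1 m2 = m2"
  using mag_sum A4 by metis

lemma prec_mul: "e p = Z \<Longrightarrow> e q = Z \<Longrightarrow> e (mul p q) = Z"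
  using AM2[of p q] Zmul_prec by simp

lemma O3m: "e M = M \<Longrightarrow> add y M = M \<Longrightarrow> le y M \<and> le (ng y) M"
  using O3[of y M] by simp

lemma addle2: "le y M \<Longrightarrow> le y' M \<Longrightarrow> e M = M \<Longrightarrow> le (add y y') M"
proof -
  assume a: "le y M" "le y' M" "e M = M"
  have "le (add y y') (add M y')" using O2[OF a(1)] .
  moreover have "le (add y' M) (add M M)" using O2[OF a(2)] .
  ultimately show ?thesis using a(3) mag_idem[of M] comm ltrans by metis
qed

lemma main:
  assumes x: "x \<noteq> e x" and hb: "e b = Z"
    and hu: "unit_s mul x = add (add I b) (e (unit_s mul x))"
  shows "le b (e (unit_s mul x)) \<and> le (ng b) (e (unit_s mul x))"
proof -
  define u where "u = unit_s mul x"
  define E where "E = e u"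
  define c where "c = add I b"
  have xu: "mul x u = x" unfolding u_def using unit1[OF x] .
  have uu: "mul u u = u" unfolding u_def using unit2[OF x unit1[OF x]] .
  have eE: "e E = E" unfolding E_def by simp
  have ec: "e c = Z" unfolding c_def using A4[of I b] eI_zero hb by auto
  have huc: "u = add c E" using hu unfolding u_def E_def c_def .
  have u_zl: "u \<noteq> E"
  proof
    assume h: "u = E"
    have "mul x u = mul (e u) x" using h mcomm unfolding E_def by metis
    then have "e x = x" using xu magmul[of u x] by simp
    then show False using x by simp
  qed
  have EZ: "le Z E" unfolding E_def by (rule mag_nonneg)
  have Eu: "mul E u = E"
  proof -
    have "e (mul u u) = add (mul E u) (mul E u)" using AM2[of u u] unfolding E_def by simp
    then show ?thesis using uu magmul[of u u] mag_idem[of "mul E u"] unfolding E_def by metis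
  qed
  have EE: "add E (mul E E) = E"
  proof -
    have "e (mul E u) = add (mul E u) (mul E E)" using AM2[of E u] eE unfolding E_def by (simp add: mcomm)
    then show ?thesis using Eu eE by simp
  qed
  define K where "K = mul E c"
  have eK: "e K = K" unfolding K_def E_def by (rule magmul)
  have cK: "mul c E = K" unfolding K_def by (rule mcomm)
  have eq1: "add (mul u c) E = add (add u K) (mul E E)"
    using AM4[of u c E] huc[symmetric] uu Eu mcomm[of u E] unfolding E_def K_def by simp
  have eq2: "add (mul c c) K = add (mul u c) (mul Z E)"
    using AM4[of c c E] huc[symmetric] ec Zmul_prec[OF ec] mcomm[of c u] cK by simp
  have ZE: "add (mul Z E) E = E" using Zmul_absorb[of E] eE by simp
  define N where "N = add K E"
  have eN: "e N = N" unfolding N_def using mag_sum eK eE by blast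
  have eq3: "add (mul c c) N = add c N"
  proof -
    have "add (mul c c) N = add (add (mul c c) K) E" unfolding N_def by (simp only: assoc)
    also have "\<dots> = add (mul u c) (add (mul Z E) E)" using eq2 by (simp only: assoc)
    also have "\<dots> = add (mul u c) E" using ZE by simp
    also have "\<dots> = add (add (add c E) K) (mul E E)" using eq1 huc by simp
    also have "\<dots> = add c (add K (add E (mul E E)))" by (simp only: assoc comm lcomm)
    also have "\<dots> = add c N" using EE unfolding N_def by simp
    finally show ?thesis .
  qed
  have ccb: "mul c c = add c (mul c b)"
    using distrib_prec[OF ec eI_zero hb] c_def by simp
  have star: "add (mul c b) N = N"
  proof -
    have "add (add (mul c c) N) (ng c) = add (add c N) (ng c)" using eq3 by simp
    moreover have "add (add c N) (ng c) = N" using ec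
      by (metis assoc comm neg_add zero_add)
    moreover have "add (add (mul c c) N) (ng c) = add (mul c b) N" using ccb ec
      by (metis assoc comm neg_add zero_add)
    ultimately show ?thesis by simp
  qed
  have eb': "e (ng b) = Z" using hb by simp
  have ecb: "e (mul c b) = Z" using prec_mul ec hb by blast
  have cd: "add c (ng b) = I" unfolding c_def using hb by (simp add: assoc)
  have goal: "le s E" if s: "s = b \<or> s = ng b" for s
  proof (rule ccontr)
    assume ns: "\<not> le s E"
    then have Es: "le E s" "s \<noteq> E" using total lrefl by blast+
    have es: "e s = Z" using s hb eb' by auto
    have sZ: "le Z s" using EZ Es ltrans by blast
    have snz: "s \<noteq> Z" using ns EZ by blast
    show False
    proof (cases "N = E")
      case True
      have cbE: "le (mul c b) E" "le (ng (mul c b)) E" using O3m[OF eE] star True by auto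
      show ?thesis
      proof (cases "s = b")
        case sb: True
        have "le (add Z I) (add b I)" using O2 sZ sb by blast
        then have lIc: "le I c" unfolding c_def using comm by simp
        have "le (mul b I) (mul b c)" using O4[of b I c] lIc sZ snz sb hb by simp
        then have "le b E" using cbE mcomm[of b c] ltrans by simp
        then show False using ns sb by simp
      next
        case sd: False
        then have sd: "s = ng b" using s by blast
        have dcE: "le (mul s c) E" using cbE AM5[of b c] mcomm[of b c] sd by simp
        have dc': "le (mul c s) E" using dcE mcomm by metis
        show False
        proof (cases "le E c \<and> c \<noteq> E")
          case True
          have cZ: "le Z c" using EZ True ltrans by blast
          have cnz: "c \<noteq> Z" using True EZ lantisym by blast
          have s2: "le (add (mul s c) (mul s c)) E" using addle2 dcE eE by blast
          have c2: "le (add (mul c s) (mul c s)) E" using addle2 dc' eE by blast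
          show False
          proof (cases "le s c")
            case True
            have "le (add s c) (add c c)" using O2[OF True] .
            then have "le I (add c c)" using cd sd comm by metis
            then have "le (mul s I) (mul s (add c c))" using O4[of s I "add c c"] es sZ snz by simp
            then have "le s E" using distrib_prec[OF es ec ec] s2 ltrans by simp
            then show False using ns by simp
          next
            case False
            then have "le c s" using total by blast
            have "le (add c s) (add s s)" using O2[OF \<open>le c s\<close>] .
            then have "le I (add s s)" using cd sd comm by metis
            then have "le (mul c I) (mul c (add s s))" using O4[of c I "add s s"] ec cZ cnz by simp
            then have "le c E" using distrib_prec[OF ec es es] c2 ltrans by simp
            then show False using True by (metis lantisym \<open>le E c \<and> c \<noteq> E\<close>)
          qed
        next
          case nc: False
          show False
          proof (cases "le E (ng c) \<and> ng c \<noteq> E")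
            case True
            have enc: "e (ng c) = Z" using ec by simp
            have ncZ: "le Z (ng c)" using EZ True ltrans by blast
            have ncnz: "ng c \<noteq> Z" using True EZ lantisym by metis
            have ds: "add I (ng c) = s"
              using cd[symmetric] sd ec by (metis assoc comm neg_add add_zero)
            have "le (add Z I) (add (ng c) I)" using O2 ncZ by blast
            then have lId: "le I s" using ds comm by simp
            have "le (mul (ng c) I) (mul (ng c) s)" using O4[of "ng c" I s] enc ncZ ncnz lId by simp
            moreover have "mul (ng c) s = mul c b"
              using sd AM5 mcomm neg_neg by metis
            ultimately have "le (ng c) E" using cbE ltrans by simp
            then show False using True lantisym by blast
          next
            case False
            have lc: "le c E" using nc total by blast
            have lnc: "le (ng c) E" using False total by blast
            have uE: "le u E" using O2[OF lc, of E] huc eE mag_idem[of E] by (metis E_def)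
            have nu: "ng u = add (ng c) E" using neg_plus[OF ec eE] huc by simp
            have nuE: "le (ng u) E" using O2[OF lnc, of E] nu eE mag_idem[of E] by (metis E_def)
            have "le (add u (ng u)) (add E (ng u))" using O2[OF uE] .
            moreover have "add E (ng u) = ng u" using comm[of E "ng u"] mag_add[of "ng u"] unfolding E_def by simp
            ultimately have "le E (ng u)" unfolding E_def by simp
            then have "ng u = E" using nuE lantisym by blast
            then have "u = E" using neg_neg[of u] neg_mag[OF eE] by metis
            then show False using u_zl by simp
          qed
        qed
      qed
    next
      case False
      then have NK: "N = K" using mag_sum2[OF eK eE] unfolding N_def by blast
      have cbK: "le (mul c b) K" "le (ng (mul c b)) K" using O3m[OF eK] star NK by auto
      have cnz: "c \<noteq> Z"
      proof
        assume "c = Z"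
        then have "N = E" unfolding N_def using cK ZE by simp
        then show False using False by simp
      qed
      have key: "False" if t: "e t = Z" "le Z t" "t \<noteq> Z" "mul t E = K"
          "mul t s = mul c b \<or> mul t s = ng (mul c b)" for t
      proof -
        have "le (mul t E) (mul t s)" using O4[of t E s] t Es by simp
        moreover have "le (mul t s) K" using t(5) cbK by auto
        ultimately have "mul t s = K" using t(4) lantisym by simp
        moreover have "e (mul t s) = Z" using prec_mul t(1) es by blast
        ultimately have "K = Z" using eK by simp
        then have "N = E" unfolding N_def by simp
        then show False using False by simp
      qed
      have prods: "mul c s = mul c b \<or> mul c s = ng (mul c b)"
        using s AM5[of b c] mcomm by metis
      show False
      proof (cases "le Z c")
        case True
        show False using key[of c] ec True cnz cK prods by blast
      next
        case False
        then have "le c Z" using total by blast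
        then have "le (add c (ng c)) (add Z (ng c))" by (rule O2)
        then have ncZ: "le Z (ng c)" using ec by simp
        have ncnz: "ng c \<noteq> Z" using cnz neg_neg by (metis mag_Z neg_mag)
        have "mul (ng c) E = ng K" using AM5[of c E] cK by simp
        then have ncE: "mul (ng c) E = K" using neg_mag[OF eK] by simp
        have "mul (ng c) s = ng (mul c s)" using AM5 by metis
        then have "mul (ng c) s = mul c b \<or> mul (ng c) s = ng (mul c b)" using prods by auto
        then show False using key[of "ng c"] ec ncZ ncnz ncE by simp
      qed
    qed
  qed
  show ?thesis using goal unfolding u_def[symmetric] E_def[symmetric] by blast
qed

end

theorem mainTheorem11:
  fixes add mul :: "'a \<Rightarrow> 'a \<Rightarrow> 'a" and le :: "'a \<Rightarrow> 'a \<Rightarrow> bool" and x a b :: 'a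
  assumes "solid add mul le"
    and "x \<noteq> mag add x"
    and "x = add a (mag add x)" and "mag add a = zero_s add"
    and "mag add b = zero_s add"
    and "unit_s mul x = add (add (one_s mul) b) (mag add (unit_s mul x))"
  shows "le (abs_s add le b) (mag add (unit_s mul x))"
proof -
  interpret sol add mul le using assms(1) by (unfold_locales)
  have "le b (mag add (unit_s mul x)) \<and> le (neg_s add b) (mag add (unit_s mul x))"
    using main[OF assms(2) assms(5) assms(6)] .
  then show ?thesis unfolding abs_s_def by simp
qed

end
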